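(* Let $\beta_1>0$, $\beta_2>0$ and $\beta_3\ge 0$ be real constants, and consider the linear system of partial differential equations for unknowns $p(x,t)$, $u(x,t)$, $x\in\mathbb{R}$, $t\ge 0$: \[ p_t + \beta_1 u_x - \beta_2\, \partial_t^3 p + \beta_3\, \partial_t^5 p = 0, \qquad u_t + p_x = 0 . \] Call a pair $(k,\omega)\in\mathbb{R}\times\mathbb{C}$ admissible if there exist constants $(\hat p,\hat u)\in\mathbb{C}^2\setminus\{(0,0)\}$ such that $p=\hat p\,e^{i(kx-\omega t)}$, $u=\hat u\,e^{i(kx-\omega t)}$ solves the system; equivalently, $\omega^2+\beta_2\omega^4+\beta_3\omega^6-\beta_1k^2=0$. Then: (i) for every $k\in\mathbb{R}$ there exists $\omega\in\mathbb{C}$ with $\operatorname{Im}\omega>0$ such that $(k,\omega)$ is admissible, i.e.\ the system is linearly unstable at every wavenumber (the corresponding plane wave grows exponentially in time); (ii) such $\omega=\omega(k)$ can be chosen so that $\operatorname{Im}\omega(k)\to+\infty$ as $|k|\to\infty$, so the initial value problem for the system is ill-posed.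
   Context: A plane wave $\hat p\,e^{i(kx-\omega t)}$ with $\operatorname{Im}\omega>0$ grows like $e^{(\operatorname{Im}\omega) t}$; unbounded growth rates as $|k|\to\infty$ mean the initial value problem is not well-posed in the sense of Hadamard. The case $\beta_3=0$ is included. *)

theory Defs
  imports "HOL-Analysis.Analysis"
begin

definition dtn :: "nat \<Rightarrow> (real \<Rightarrow> real \<Rightarrow> complex) \<Rightarrow> real \<Rightarrow> real \<Rightarrow> complex" where
  "dtn n f x t = ((\<lambda>g s. vector_derivative g (at s)) ^^ n) (\<lambda>s. f x s) t"

definition dx :: "(real \<Rightarrow> real \<Rightarrow> complex) \<Rightarrow> real \<Rightarrow> real \<Rightarrow> complex" where
  "dx f x t = vector_derivative (\<lambda>y. f y t) (at x)"

definition plane_wave :: "complex \<Rightarrow> real \<Rightarrow> complex \<Rightarrow> real \<Rightarrow> real \<Rightarrow> complex" where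
  "plane_wave a k \<omega> x t = a * exp (\<i> * (complex_of_real k * complex_of_real x - \<omega> * complex_of_real t))"

definition solves_system :: "real \<Rightarrow> real \<Rightarrow> real \<Rightarrow> (real \<Rightarrow> real \<Rightarrow> complex) \<Rightarrow> (real \<Rightarrow> real \<Rightarrow> complex) \<Rightarrow> bool" where
  "solves_system b1 b2 b3 p u \<longleftrightarrow>
     (\<forall>x t. t \<ge> 0 \<longrightarrow>
        dtn 1 p x t + complex_of_real b1 * dx u x t - complex_of_real b2 * dtn 3 p x t
          + complex_of_real b3 * dtn 5 p x t = 0
      \<and> dtn 1 u x t + dx p x t = 0)"

definition admissible :: "real \<Rightarrow> real \<Rightarrow> real \<Rightarrow> real \<Rightarrow> complex \<Rightarrow> bool" where
  "admissible b1 b2 b3 k \<omega> \<longleftrightarrow>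
     (\<exists>ph uh. (ph, uh) \<noteq> (0, 0) \<and>
        solves_system b1 b2 b3 (plane_wave ph k \<omega>) (plane_wave uh k \<omega>))"

end

theory Submission imports Defs begin

lemma pw_dt: "((\<lambda>s. plane_wave a k \<omega> x s) has_vector_derivative (-\<i>*\<omega>) * plane_wave a k \<omega> x t) (at t)"
proof -
  have "((\<lambda>s::complex. a * exp (\<i> * (of_real k * of_real x - \<omega> * s))) has_field_derivative
        (-\<i>*\<omega>) * (a * exp (\<i> * (of_real k * of_real x - \<omega> * of_real t)))) (at (of_real t))"
    by (auto intro!: derivative_eq_intros simp: algebra_simps)
  from has_vector_derivative_real_field[OF this] show ?thesis
    by (simp add: plane_wave_def)
qed

lemma pw_dx: "((\<lambda>y. plane_wave a k \<omega> y t) has_vector_derivative (\<i> * of_real k) * plane_wave a k \<omega> x t) (at x)"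
proof -
  have "((\<lambda>y::complex. a * exp (\<i> * (of_real k * y - \<omega> * of_real t))) has_field_derivative
        (\<i> * of_real k) * (a * exp (\<i> * (of_real k * of_real x - \<omega> * of_real t)))) (at (of_real x))"
    by (auto intro!: derivative_eq_intros simp: algebra_simps)
  from has_vector_derivative_real_field[OF this] show ?thesis
    by (simp add: plane_wave_def)
qed

lemma pw_scale: "c * plane_wave a k \<omega> x t = plane_wave (c*a) k \<omega> x t"
  by (simp add: plane_wave_def)

lemma funpow_pw: "((\<lambda>g s. vector_derivative g (at s)) ^^ n) (\<lambda>s. plane_wave a k \<omega> x s)
   = (\<lambda>s. (-\<i>*\<omega>)^n * plane_wave a k \<omega> x s)"
proof (induction n)
  case 0 then show ?case by simp
next
  case (Suc n)
  show ?case
    apply (simp only: funpow.simps comp_apply Suc pw_scale)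
    apply (rule ext)
    apply (subst vector_derivative_at[OF pw_dt])
    apply (simp add: plane_wave_def)
    done
qed

lemma dtn_pw: "dtn n (plane_wave a k \<omega>) x t = (-\<i>*\<omega>)^n * plane_wave a k \<omega> x t"
  unfolding dtn_def using funpow_pw[of n a k \<omega> x] by simp

lemma dx_pw: "dx (plane_wave a k \<omega>) x t = (\<i> * of_real k) * plane_wave a k \<omega> x t"
  unfolding dx_def by (rule vector_derivative_at[OF pw_dx])

lemma adm:
  assumes "\<omega> \<noteq> 0" "\<omega>^2 + of_real b2 * \<omega>^4 + of_real b3 * \<omega>^6 = of_real (b1 * k^2)"
  shows "admissible b1 b2 b3 k \<omega>"
  unfolding admissible_def
proof (intro exI conjI)
  show "(1::complex, of_real k / \<omega>) \<noteq> (0,0)" by simp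
  show "solves_system b1 b2 b3 (plane_wave 1 k \<omega>) (plane_wave (of_real k / \<omega>) k \<omega>)"
    unfolding solves_system_def
  proof (intro allI impI conjI)
    fix x t :: real
    let ?E = "plane_wave 1 k \<omega> x t"
    have e2: "plane_wave (of_real k / \<omega>) k \<omega> x t = (of_real k / \<omega>) * ?E"
      by (simp add: plane_wave_def)
    have key: "(-\<i>*\<omega>) + of_real b1 * (\<i> * of_real k) * (of_real k / \<omega>) - of_real b2 * (-\<i>*\<omega>)^3
        + of_real b3 * (-\<i>*\<omega>)^5 = 0"
    proof -
      have "(-\<i>*\<omega>) + of_real b1 * (\<i> * of_real k) * (of_real k / \<omega>) - of_real b2 * (-\<i>*\<omega>)^3
        + of_real b3 * (-\<i>*\<omega>)^5 = (-\<i>/\<omega>) * (\<omega>^2 + of_real b2 * \<omega>^4 + of_real b3 * \<omega>^6 - of_real (b1 * k^2))"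
        using assms(1) by (simp add: field_simps power2_eq_square power_def eval_nat_numeral)
      also have "\<dots> = 0" using assms(2) by simp
      finally show ?thesis .
    qed
    show "dtn 1 (plane_wave 1 k \<omega>) x t + of_real b1 * dx (plane_wave (of_real k / \<omega>) k \<omega>) x t -
          of_real b2 * dtn 3 (plane_wave 1 k \<omega>) x t + of_real b3 * dtn 5 (plane_wave 1 k \<omega>) x t = 0"
    proof -
      have "dtn 1 (plane_wave 1 k \<omega>) x t + of_real b1 * dx (plane_wave (of_real k / \<omega>) k \<omega>) x t -
          of_real b2 * dtn 3 (plane_wave 1 k \<omega>) x t + of_real b3 * dtn 5 (plane_wave 1 k \<omega>) x t
        = ((-\<i>*\<omega>) + of_real b1 * (\<i> * of_real k) * (of_real k / \<omega>) - of_real b2 * (-\<i>*\<omega>)^3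
        + of_real b3 * (-\<i>*\<omega>)^5) * ?E"
        unfolding dtn_pw dx_pw e2 by (simp add: algebra_simps)
      then show ?thesis using key by simp
    qed
    show "dtn 1 (plane_wave (of_real k / \<omega>) k \<omega>) x t + dx (plane_wave 1 k \<omega>) x t = 0"
      unfolding dtn_pw dx_pw e2 using assms(1) by (simp add: field_simps)
  qed
qed


lemma root_exists:
  fixes b2 b3 c :: real
  assumes b2: "b2 > 0" and b3: "b3 \<ge> 0" and c: "c \<ge> 0"
  shows "\<exists>z::complex. Re z < 0 \<and> of_real b3 * z^3 + of_real b2 * z^2 + z = of_real c"
proof (cases "b3 = 0")
  case True
  define s where "s = sqrt (1 + 4*b2*c)"
  have nn: "0 \<le> 1 + 4*b2*c" using b2 c by (simp add: mult_nonneg_nonneg)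
  then have s2: "s^2 = 1 + 4*b2*c" unfolding s_def by (rule real_sqrt_pow2)
  have s0: "s \<ge> 0" unfolding s_def using nn by simp
  define z where "z = - (1 + s) / (2*b2)"
  have "b2 * z^2 + z = c"
    unfolding z_def using b2 s2 by (simp add: field_simps power2_eq_square) 
  then have "of_real b3 * (of_real z)^3 + of_real b2 * (of_real z)^2 + of_real z = (of_real c :: complex)"
    using True by (metis of_real_add of_real_mult of_real_power mult_zero_left add_0)
  moreover have "Re (of_real z) < 0" unfolding z_def using b2 s0 by (simp add: field_simps)
  ultimately show ?thesis by blast
next
  case False
  then have b3p: "b3 > 0" using b3 by simp
  define f where "f r = b3*r^3 + b2*r^2 + r" for r :: real
  have "\<exists>r. 0 \<le> r \<and> r \<le> c \<and> f r = c"
  proof (rule IVT')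
    show "f 0 \<le> c" using c by (simp add: f_def)
    show "c \<le> f c" using c b2 b3 by (simp add: f_def)
    show "0 \<le> c" by fact
    show "continuous_on {0..c} f" unfolding f_def by (intro continuous_intros)
  qed
  then obtain r where r0: "r \<ge> 0" and fr: "b3*r^3 + b2*r^2 + r = c" unfolding f_def by blast
  define a where "a = r + b2/b3"
  define d where "d = a*r + 1/b3"
  have a0: "a > 0" unfolding a_def using r0 b2 b3p by (metis add_nonneg_pos divide_pos_pos)
  define q where "q = csqrt (of_real (a^2/4 - d))"
  define z where "z = - of_real a / 2 - q"
  have q2: "q^2 = of_real (a^2/4 - d)" unfolding q_def by simp
  have quad: "z^2 + of_real a * z + of_real d = 0"
    unfolding z_def using q2 by (simp add: algebra_simps power2_eq_square)
  have cd: "b3 * r * d = c" unfolding d_def a_def using fr b3p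
    by (simp add: field_simps power2_eq_square power3_eq_cube)
  have fac: "of_real b3 * z^3 + of_real b2 * z^2 + z - of_real c
      = of_real b3 * (z - of_real r) * (z^2 + of_real a * z + of_real d)"
  proof -
    have ba: "b2 = b3 * (a - r)" unfolding a_def using b3p by simp
    have bd: "1 = b3 * (d - a * r)" unfolding d_def using b3p by simp
    have "of_real b3 * z^3 + of_real b2 * z^2 + z - of_real c
       = of_real b3 * z^3 + of_real (b3 * (a - r)) * z^2 + of_real (b3 * (d - a * r)) * z - of_real (b3 * r * d)"
      using ba bd cd by simp
    also have "\<dots> = of_real b3 * (z - of_real r) * (z^2 + of_real a * z + of_real d)"
      by (simp add: algebra_simps power2_eq_square power3_eq_cube)
    finally show ?thesis .
  qed
  have "of_real b3 * z^3 + of_real b2 * z^2 + z = of_real c"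
    using fac quad by simp
  moreover have "Re z < 0"
  proof -
    have "Re q \<ge> 0" unfolding q_def using csqrt_principal[of "of_real (a^2/4 - d)"] by auto
    then show ?thesis unfolding z_def using a0 by simp
  qed
  ultimately show ?thesis by blast
qed

lemma re_csqrt_pos: "Re w > 0 \<Longrightarrow> Re (csqrt w) > 0"
proof -
  assume w: "Re w > 0"
  have "Re (csqrt w) \<noteq> 0"
  proof
    assume h: "Re (csqrt w) = 0"
    have "Re w = Re ((csqrt w)^2)" by (simp only: power2_csqrt)
    also have "\<dots> = Re (csqrt w)^2 - Im (csqrt w)^2" by (simp only: Re_power2)
    finally have e: "Re w = Re (csqrt w)^2 - Im (csqrt w)^2" .
    have "Im (csqrt w)^2 \<ge> 0" by (rule zero_le_power2)
    moreover have "Re (csqrt w)^2 = 0" using h by simp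
    ultimately show False using e w by linarith
  qed
  then show ?thesis using csqrt_principal[of w] by auto
qed

theorem mainTheorem1:
  fixes b1 b2 b3 :: real
  assumes "b1 > 0" and "b2 > 0" and "b3 \<ge> 0"
  shows "(\<forall>k::real. \<exists>\<omega>. Im \<omega> > 0 \<and> admissible b1 b2 b3 k \<omega>)
       \<and> (\<exists>\<omega> :: real \<Rightarrow> complex.
            (\<forall>k. Im (\<omega> k) > 0 \<and> admissible b1 b2 b3 k (\<omega> k))
          \<and> filterlim (\<lambda>k. Im (\<omega> k)) at_top at_infinity)"
proof -
  have "\<forall>k. \<exists>z::complex. Re z < 0 \<and> of_real b3 * z^3 + of_real b2 * z^2 + z = of_real (b1*k^2)"
  proof
    fix k :: real
    have "b1 * k^2 \<ge> 0" using assms(1) by simp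
    then show "\<exists>z::complex. Re z < 0 \<and> of_real b3 * z^3 + of_real b2 * z^2 + z = of_real (b1*k^2)"
      using root_exists[OF assms(2,3)] by blast
  qed
  then obtain Z where Z: "\<And>k. Re (Z k) < 0" "\<And>k. of_real b3 * (Z k)^3 + of_real b2 * (Z k)^2 + Z k = of_real (b1*k^2)"
    by metis
  define W where "W k = \<i> * csqrt (- Z k)" for k
  have W2: "(W k)^2 = Z k" for k unfolding W_def by (simp add: power_mult_distrib)
  have ImW: "Im (W k) = Re (csqrt (- Z k))" for k unfolding W_def by simp
  have Wpos: "Im (W k) > 0" for k unfolding ImW by (rule re_csqrt_pos) (use Z(1)[of k] in simp)
  have Wadm: "admissible b1 b2 b3 k (W k)" for k
  proof (rule adm)
    show "W k \<noteq> 0" using Wpos[of k] by auto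
    have "(W k)^4 = (Z k)^2" using W2[of k] by (metis power_mult numeral_Bit0 mult_2_right numeral_One numeral_eq_iff)
    moreover have "(W k)^6 = (Z k)^3"
    proof -
      have "(W k)^6 = ((W k)^2)^3" by (simp flip: power_mult)
      then show ?thesis using W2[of k] by simp
    qed
    ultimately show "(W k)^2 + of_real b2 * (W k)^4 + of_real b3 * (W k)^6 = of_real (b1 * k^2)"
      using W2[of k] Z(2)[of k] by (simp add: algebra_simps)
  qed
  have lim: "filterlim (\<lambda>k. Im (W k)) at_top at_infinity"
    unfolding filterlim_at_top
  proof
    fix M :: real
    define M' where "M' = max M 1"
    define R where "R = 2 * M'^2"
    define Q where "Q = b3 * R^3 + b2 * R^2 + R"
    define B where "B = sqrt (Q / b1) + 1"
    have R0: "R \<ge> 0" unfolding R_def by simp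
    have Q0: "Q \<ge> 0" unfolding Q_def using R0 assms by simp
    show "eventually (\<lambda>k. M \<le> Im (W k)) at_infinity"
      unfolding eventually_at_infinity
    proof (intro exI allI impI)
      fix k :: real
      assume kB: "B \<le> norm k"
      show "M \<le> Im (W k)"
      proof (rule ccontr)
        assume "\<not> M \<le> Im (W k)"
        then have lt: "Im (W k) < M'" unfolding M'_def by simp
        define v where "v = csqrt (- Z k)"
        have v2: "v^2 = - Z k" unfolding v_def by simp
        have rv: "Re v > 0" "Re v < M'" using Wpos[of k] lt unfolding ImW v_def by auto
        have nZ: "norm (Z k) = Re v^2 + Im v^2"
          using v2 by (metis cmod_power2 norm_minus_cancel norm_power)
        have "Re (- Z k) = Re v^2 - Im v^2" using v2 by (metis Re_power2)
        then have "Im v^2 < Re v^2" using Z(1)[of k] by simp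
        moreover have "Re v^2 < M'^2" using rv by (simp add: power_strict_mono)
        ultimately have nR: "norm (Z k) \<le> R" unfolding R_def using nZ by simp
        have "b1 * k^2 = norm (of_real b3 * (Z k)^3 + of_real b2 * (Z k)^2 + Z k)"
          by (simp only: Z(2) norm_of_real) (use assms(1) in simp)
        also have "\<dots> \<le> b3 * norm (Z k)^3 + b2 * norm (Z k)^2 + norm (Z k)"
          using assms by (auto intro!: order_trans[OF norm_triangle_ineq] add_mono simp: norm_mult norm_power)
        also have "\<dots> \<le> Q" unfolding Q_def using nR assms
          by (intro add_mono mult_left_mono power_mono) auto
        finally have kq: "b1 * k^2 \<le> Q" .
        have "sqrt (Q/b1) < \<bar>k\<bar>" using kB unfolding B_def by simp
        then have "Q / b1 < k^2" using Q0 assms(1)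
          by (metis abs_ge_zero real_sqrt_abs real_sqrt_less_iff)
        then have "Q < b1 * k^2" using assms(1) by (simp add: field_simps)
        then show False using kq by simp
      qed
    qed
  qed
  show ?thesis using Wpos Wadm lim by blast
qed

end
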